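(* Let $0<c\le1$ and for $\ell>0$ let $g_c(\ell)=c\ell^2\beta_c(\ell)$ with $\beta_c(\ell)=4\int_0^\infty u^2\,\Phi\big(-\frac{\ell u}{c\sqrt2}\big)\phi(u)\,du$. Then $g_c$ is maximized at $\ell_{opt}=\frac{2.426c}{\sqrt2}=1.715c$ (to three decimals), and $$\alpha_{opt}=4\int_0^\infty\Phi\Big(-\frac{\ell_{opt}u}{c\sqrt2}\Big)\phi(u)\,du=0.439$$ up to three decimal places.
   Context: $\Phi,\phi$ are the standard normal cdf and density. $g_c$ is the diffusion speed of the limiting SDE of additive TMCMC-within-Gibbs for targets absolutely continuous with respect to a Gaussian measure, and $\alpha_{opt}$ the corresponding optimal acceptance rate. *)

theory Defs
  imports "HOL-Probability.Probability"
begin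

definition Phi :: "real \<Rightarrow> real" where
  "Phi x = (LINT t:{..x}|lborel. std_normal_density t)"

definition beta_c :: "real \<Rightarrow> real \<Rightarrow> real" where
  "beta_c c l = 4 * (LINT u:{0<..}|lborel.
      u\<^sup>2 * Phi (- (l * u) / (c * sqrt 2)) * std_normal_density u)"

definition g_c :: "real \<Rightarrow> real \<Rightarrow> real" where
  "g_c c l = c * l\<^sup>2 * beta_c c l"

definition alpha_c :: "real \<Rightarrow> real \<Rightarrow> real" where
  "alpha_c c l = 4 * (LINT u:{0<..}|lborel.
      Phi (- (l * u) / (c * sqrt 2)) * std_normal_density u)"

end

theory Submission
  imports Defs "HOL-Real_Asymp.Real_Asymp"
begin


lemma snd_nonneg: "0 \<le> std_normal_density x" by (simp add: normal_density_nonneg)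

lemma integrable_snd_ind: "integrable lborel (\<lambda>t. indicator A t * std_normal_density t)"
  if "A \<in> sets borel" for A
proof -
  have "integrable lborel (\<lambda>t. std_normal_density t * t^0)"
    by (rule integrable_std_normal_moment)
  then have "integrable lborel std_normal_density" by simp
  then show ?thesis using integrable_mult_indicator[of A lborel std_normal_density] that by simp
qed

lemma Phi_nn: "ennreal (Phi x) = (\<integral>\<^sup>+t. ennreal (indicator {..x} t * std_normal_density t) \<partial>lborel)"
proof -
  have "Phi x = (\<integral>t. indicator {..x} t * std_normal_density t \<partial>lborel)"
    by (simp add: Phi_def set_lebesgue_integral_def)
  then show ?thesis
    by (simp add: nn_integral_eq_integral integrable_snd_ind snd_nonneg)
qed

lemma Phi_nonneg: "0 \<le> Phi x"
  unfolding Phi_def set_lebesgue_integral_def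
  by (intro integral_nonneg_AE) (auto simp: snd_nonneg)

lemma Phi_mono: "mono Phi"
proof
  fix x y :: real assume "x \<le> y"
  have "ennreal (Phi x) \<le> ennreal (Phi y)"
    unfolding Phi_nn using \<open>x \<le> y\<close>
    by (intro nn_integral_mono) (auto simp: snd_nonneg split: split_indicator)
  then show "Phi x \<le> Phi y" using Phi_nonneg by (simp add: ennreal_le_iff)
qed

lemma Phi_measurable[measurable]: "Phi \<in> borel_measurable borel"
  by (rule borel_measurable_mono[OF Phi_mono])

lemma snd_even: "std_normal_density (- x) = std_normal_density x"
  by (simp add: std_normal_density_def)

lemma Phi_subst:
  assumes "0 < u"
  shows "ennreal (Phi (-(a*u))) = (\<integral>\<^sup>+y. ennreal (u * std_normal_density (u*y)) * indicator {a ..} y \<partial>lborel)"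
proof -
  have "ennreal (Phi (-(a*u))) = ennreal \<bar>-u\<bar> * (\<integral>\<^sup>+y. ennreal (indicator {..-(a*u)} (0 + (-u)*y) * std_normal_density (0 + (-u)*y)) \<partial>lborel)"
    unfolding Phi_nn using assms by (intro nn_integral_real_affine) auto
  also have "\<dots> = (\<integral>\<^sup>+y. ennreal u * ennreal (indicator {..-(a*u)} (0 + (-u)*y) * std_normal_density (0 + (-u)*y)) \<partial>lborel)"
    using assms by (subst nn_integral_cmult) auto
  also have "\<dots> = (\<integral>\<^sup>+y. ennreal (u * std_normal_density (u*y)) * indicator {a ..} y \<partial>lborel)"
  proof (intro nn_integral_cong)
    fix y :: real
    have "(-u*y \<le> -(a*u)) = (a \<le> y)" using assms by (simp add: mult.commute)
    then show "ennreal u * ennreal (indicator {..-(a*u)} (0 + (-u)*y) * std_normal_density (0 + (-u)*y)) =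
          ennreal (u * std_normal_density (u*y)) * indicator {a ..} y"
      using assms snd_even[of "u*y"]
      by (auto simp: ennreal_mult[symmetric] split: split_indicator)
  qed
  finally show ?thesis .
qed


lemma swap:
  assumes w[measurable]: "w \<in> borel_measurable borel" and wnn: "\<And>u. 0 \<le> w u"
  shows "(LINT u:{0<..}|lborel. w u * Phi (-(a*u)) * std_normal_density u) =
    enn2real (\<integral>\<^sup>+y. (\<integral>\<^sup>+u. ennreal (w u * u * std_normal_density u * std_normal_density (u*y)) * indicator {0<..} u \<partial>lborel) * indicator {a ..} y \<partial>lborel)"
proof -
  let ?F = "\<lambda>u y. ennreal (w u * u * std_normal_density u * std_normal_density (u*y)) * indicator {0<..} u * indicator {a ..} y"
  have "(LINT u:{0<..}|lborel. w u * Phi (-(a*u)) * std_normal_density u) =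
     (\<integral>u. indicator {0<..} u * (w u * Phi (-(a*u)) * std_normal_density u) \<partial>lborel)"
    by (simp add: set_lebesgue_integral_def)
  also have "\<dots> = enn2real (\<integral>\<^sup>+u. ennreal (indicator {0<..} u * (w u * Phi (-(a*u)) * std_normal_density u)) \<partial>lborel)"
    by (rule integral_eq_nn_integral) (auto simp: wnn Phi_nonneg snd_nonneg)
  also have "(\<integral>\<^sup>+u. ennreal (indicator {0<..} u * (w u * Phi (-(a*u)) * std_normal_density u)) \<partial>lborel)
     = (\<integral>\<^sup>+u. (\<integral>\<^sup>+y. ?F u y \<partial>lborel) \<partial>lborel)"
  proof (intro nn_integral_cong)
    fix u :: real
    show "ennreal (indicator {0<..} u * (w u * Phi (-(a*u)) * std_normal_density u)) = (\<integral>\<^sup>+y. ?F u y \<partial>lborel)"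
    proof (cases "0 < u")
      case True
      have "ennreal (indicator {0<..} u * (w u * Phi (-(a*u)) * std_normal_density u))
          = ennreal (w u * std_normal_density u) * ennreal (Phi (-(a*u)))"
        using True by (simp add: ennreal_mult[symmetric] wnn Phi_nonneg snd_nonneg mult_ac)
      also have "\<dots> = ennreal (w u * std_normal_density u) * (\<integral>\<^sup>+y. ennreal (u * std_normal_density (u*y)) * indicator {a ..} y \<partial>lborel)"
        using Phi_subst[OF True] by simp
      also have "\<dots> = (\<integral>\<^sup>+y. ennreal (w u * std_normal_density u) * (ennreal (u * std_normal_density (u*y)) * indicator {a ..} y) \<partial>lborel)"
        by (rule nn_integral_cmult[symmetric]) auto
      also have "\<dots> = (\<integral>\<^sup>+y. ?F u y \<partial>lborel)"
        using True by (intro nn_integral_cong) (simp add: ennreal_mult[symmetric] wnn snd_nonneg mult_ac)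
      finally show ?thesis .
    qed auto
  qed
  also have "\<dots> = (\<integral>\<^sup>+y. (\<integral>\<^sup>+u. ?F u y \<partial>lborel) \<partial>lborel)"
    by (rule lborel_pair.Fubini'[symmetric]) measurable
  also have "\<dots> = (\<integral>\<^sup>+y. (\<integral>\<^sup>+u. ennreal (w u * u * std_normal_density u * std_normal_density (u*y)) * indicator {0<..} u \<partial>lborel) * indicator {a ..} y \<partial>lborel)"
    by (intro nn_integral_cong nn_integral_multc) measurable
  finally show ?thesis by simp
qed


lemma snd_prod: "std_normal_density u * std_normal_density (u*y) = exp (-((1+y^2)*u^2/2)) / (2*pi)"
  by (simp add: std_normal_density_def mult_exp_exp field_simps power_mult_distrib real_sqrt_mult[symmetric])

lemma lim1: "k > 0 \<Longrightarrow> ((\<lambda>u::real. - exp (-(k*u^2/2)) / (2*pi*k)) \<longlongrightarrow> 0) at_top"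
  by real_asymp

lemma lim3: "k > 0 \<Longrightarrow> ((\<lambda>u::real. - ((u^2/k + 2/k^2) * exp (-(k*u^2/2))) / (2*pi)) \<longlongrightarrow> 0) at_top"
  by real_asymp

lemma inner0:
  "(\<integral>\<^sup>+u. ennreal (1 * u * std_normal_density u * std_normal_density (u*y)) * indicator {0<..} u \<partial>lborel)
    = ennreal (1 / (2*pi*(1+y^2)))"
proof -
  define k where "k = 1 + y^2"
  have k: "k > 0" unfolding k_def by (simp add: add_pos_nonneg)
  have "(\<integral>\<^sup>+u. ennreal (1 * u * std_normal_density u * std_normal_density (u*y)) * indicator {0<..} u \<partial>lborel)
     = (\<integral>\<^sup>+u. ennreal (u * exp (-(k*u^2/2)) / (2*pi)) * indicator {0 ..} u \<partial>lborel)"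
    by (intro nn_integral_cong) (auto simp: mult.assoc snd_prod k_def split: split_indicator)
  also have "\<dots> = ennreal (0 - (- exp (-(k*0^2/2)) / (2*pi*k)))"
  proof (rule nn_integral_FTC_atLeast)
    show "((\<lambda>u::real. - exp (-(k*u^2/2)) / (2*pi*k)) \<longlongrightarrow> 0) at_top" using k by (rule lim1)
    fix x :: real assume "0 \<le> x"
    then show "0 \<le> x * exp (-(k*x^2/2)) / (2*pi)" by simp
    show "((\<lambda>u::real. - exp (-(k*u^2/2)) / (2*pi*k)) has_real_derivative x * exp (-(k*x^2/2)) / (2*pi)) (at x)"
      using k by (auto intro!: derivative_eq_intros simp: field_simps)
  qed simp
  finally show ?thesis by (simp add: k_def)
qed

lemma inner2:
  "(\<integral>\<^sup>+u. ennreal (u^2 * u * std_normal_density u * std_normal_density (u*y)) * indicator {0<..} u \<partial>lborel)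
    = ennreal (1 / (pi*(1+y^2)^2))"
proof -
  define k where "k = 1 + y^2"
  have k: "k > 0" unfolding k_def by (simp add: add_pos_nonneg)
  have "(\<integral>\<^sup>+u. ennreal (u^2 * u * std_normal_density u * std_normal_density (u*y)) * indicator {0<..} u \<partial>lborel)
     = (\<integral>\<^sup>+u. ennreal (u^3 * exp (-(k*u^2/2)) / (2*pi)) * indicator {0 ..} u \<partial>lborel)"
    by (intro nn_integral_cong) (auto simp: snd_prod k_def power3_eq_cube power2_eq_square mult_ac split: split_indicator)
  also have "\<dots> = ennreal (0 - (- ((0^2/k + 2/k^2) * exp (-(k*0^2/2))) / (2*pi)))"
  proof (rule nn_integral_FTC_atLeast)
    show "((\<lambda>u::real. - ((u^2/k + 2/k^2) * exp (-(k*u^2/2))) / (2*pi)) \<longlongrightarrow> 0) at_top" using k by (rule lim3)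
    fix x :: real assume "0 \<le> x"
    then show "0 \<le> x^3 * exp (-(k*x^2/2)) / (2*pi)" by simp
    show "((\<lambda>u::real. - ((u^2/k + 2/k^2) * exp (-(k*u^2/2))) / (2*pi)) has_real_derivative x^3 * exp (-(k*x^2/2)) / (2*pi)) (at x)"
      using k by (auto intro!: derivative_eq_intros simp: field_simps power2_eq_square power3_eq_cube)
  qed simp
  finally show ?thesis by (simp add: k_def)
qed


lemma outer0:
  "(\<integral>\<^sup>+y. ennreal (1 / (2*pi*(1+y^2))) * indicator {a ..} y \<partial>lborel) = ennreal ((pi/2 - arctan a) / (2*pi))"
proof -
  have "(\<integral>\<^sup>+y. ennreal (1 / (2*pi*(1+y^2))) * indicator {a ..} y \<partial>lborel) = ennreal ((pi/2)/(2*pi) - arctan a / (2*pi))"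
  proof (rule nn_integral_FTC_atLeast)
    show "((\<lambda>y. arctan y / (2*pi)) \<longlongrightarrow> (pi/2)/(2*pi)) at_top"
      by (intro tendsto_intros) (simp_all add: tendsto_arctan_at_top)
    fix x :: real
    show "0 \<le> 1 / (2*pi*(1+x^2))" by (simp add: add_pos_nonneg)
    show "((\<lambda>y. arctan y / (2*pi)) has_real_derivative 1 / (2*pi*(1+x^2))) (at x)"
      by (auto intro!: derivative_eq_intros simp: field_simps add_nonneg_eq_0_iff)
  qed simp
  then show ?thesis by (simp add: diff_divide_distrib)
qed

lemma d_frac: "((\<lambda>y. y/(1+y^2)) has_real_derivative (1-x^2)/(1+x^2)^2) (at x)"
proof -
  have nz: "1 + x^2 > 0" by (simp add: add_pos_nonneg)
  then show ?thesis by (auto intro!: derivative_eq_intros simp: field_simps power2_eq_square)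
qed

lemma deriv_outer2: "((\<lambda>y. (y/(1+y^2) + arctan y) / (2*pi)) has_real_derivative 1 / (pi*(1+x^2)^2)) (at x)"
proof -
  have nz: "1 + x^2 > 0" by (simp add: add_pos_nonneg)
  have d1: "((\<lambda>y. y/(1+y^2)) has_real_derivative (1-x^2)/(1+x^2)^2) (at x)"
    using nz by (auto intro!: derivative_eq_intros simp: field_simps power2_eq_square)
  have d2: "((\<lambda>y. (y/(1+y^2) + arctan y) / (2*pi)) has_real_derivative ((1-x^2)/(1+x^2)^2 + 1/(1+x^2)) / (2*pi)) (at x)"
    by (intro DERIV_cdivide DERIV_add d1) (use DERIV_arctan[of x] in \<open>simp add: inverse_eq_divide\<close>)
  have "((1-x^2)/(1+x^2)^2 + 1/(1+x^2)) / (2*pi) = 1 / (pi*(1+x^2)^2)"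
  proof -
    have e: "\<And>z::real. z > 0 \<Longrightarrow> ((2-z)/z^2 + 1/z)/(2*pi) = 1/(pi*z^2)"
      by (simp add: field_simps power2_eq_square)
    have "1 - x^2 = 2 - (1+x^2)" by simp
    then show ?thesis using e[OF nz] by simp
  qed
  with d2 show ?thesis by simp
qed

lemma outer2:
  "(\<integral>\<^sup>+y. ennreal (1 / (pi*(1+y^2)^2)) * indicator {a ..} y \<partial>lborel) = ennreal ((pi/2 - arctan a - a/(1+a^2)) / (2*pi))"
proof -
  have "(\<integral>\<^sup>+y. ennreal (1 / (pi*(1+y^2)^2)) * indicator {a ..} y \<partial>lborel) = ennreal ((pi/2)/(2*pi) - (a/(1+a^2) + arctan a) / (2*pi))"
  proof (rule nn_integral_FTC_atLeast)
    have "((\<lambda>y::real. y/(1+y^2)) \<longlongrightarrow> 0) at_top" by real_asymp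
    then have "((\<lambda>y. y/(1+y^2) + arctan y) \<longlongrightarrow> 0 + pi/2) at_top"
      by (intro tendsto_add tendsto_arctan_at_top)
    then show "((\<lambda>y. (y/(1+y^2) + arctan y) / (2*pi)) \<longlongrightarrow> (pi/2)/(2*pi)) at_top"
      by (intro tendsto_intros) simp_all
    fix x :: real
    show "0 \<le> 1 / (pi*(1+x^2)^2)" by (simp add: add_pos_nonneg)
    show "((\<lambda>y. (y/(1+y^2) + arctan y) / (2*pi)) has_real_derivative 1 / (pi*(1+x^2)^2)) (at x)"
      by (rule deriv_outer2)
  qed simp
  moreover have "(pi/2)/(2*pi) - (a/(1+a^2) + arctan a) / (2*pi) = (pi/2 - arctan a - a/(1+a^2)) / (2*pi)"
    by (simp add: diff_divide_distrib add_divide_distrib)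
  ultimately show ?thesis by simp
qed

lemma P_pos: "0 < pi/2 - arctan a - a/(1+a^2)"
proof -
  have D: "\<exists>y. ((\<lambda>x. pi/2 - arctan x - x/(1+x^2)) has_real_derivative y) (at x) \<and> y < 0" for x :: real
  proof -
    have nz: "1 + x^2 > 0" by (simp add: add_pos_nonneg)
    have d: "((\<lambda>x. pi/2 - arctan x - x/(1+x^2)) has_real_derivative 0 - 1/(1+x^2) - (1-x^2)/(1+x^2)^2) (at x)"
      by (intro DERIV_diff d_frac DERIV_const) (use DERIV_arctan[of x] in \<open>simp add: inverse_eq_divide\<close>)
    have "0 - 1/(1+x^2) - (1-x^2)/(1+x^2)^2 = -2/(1+x^2)^2"
    proof -
      have e: "\<And>z::real. z > 0 \<Longrightarrow> 0 - 1/z - (2-z)/z^2 = -2/z^2"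
        by (simp add: field_simps power2_eq_square)
      have "1 - x^2 = 2 - (1+x^2)" by simp
      then show ?thesis using e[OF nz] by simp
    qed
    then have "((\<lambda>x. pi/2 - arctan x - x/(1+x^2)) has_real_derivative -2/(1+x^2)^2) (at x)" using d by simp
    moreover have "-2/(1+x^2)^2 < 0" using nz by simp
    ultimately show ?thesis by blast
  qed
  have "((\<lambda>y::real. y/(1+y^2)) \<longlongrightarrow> 0) at_top" by real_asymp
  then have L: "((\<lambda>x. pi/2 - arctan x - x/(1+x^2)) \<longlongrightarrow> 0) at_top"
    using tendsto_diff[OF tendsto_diff[OF tendsto_const[of "pi/2"] tendsto_arctan_at_top]] by fastforce
  show ?thesis using DERIV_neg_imp_decreasing_at_top[of a "\<lambda>x. pi/2 - arctan x - x/(1+x^2)" 0] D L by simp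
qed

lemma alpha_closed:
  "alpha_c c l = 4 * ((pi/2 - arctan (l/(c * sqrt 2))) / (2*pi))"
proof -
  define a where "a = l/(c * sqrt 2)"
  have "(\<lambda>u. Phi (- (l * u) / (c * sqrt 2)) * std_normal_density u) = (\<lambda>u. (\<lambda>_. 1) u * Phi (-(a*u)) * std_normal_density u)"
    by (auto simp: a_def)
  then have "alpha_c c l = 4 * (LINT u:{0<..}|lborel. (\<lambda>_. 1) u * Phi (-(a*u)) * std_normal_density u)"
    by (simp add: alpha_c_def)
  also have "\<dots> = 4 * enn2real (\<integral>\<^sup>+y. (\<integral>\<^sup>+u. ennreal (1 * u * std_normal_density u * std_normal_density (u*y)) * indicator {0<..} u \<partial>lborel) * indicator {a ..} y \<partial>lborel)"
    by (subst swap) auto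
  also have "\<dots> = 4 * ((pi/2 - arctan a) / (2*pi))"
  proof -
    have "0 \<le> (pi/2 - arctan a)/(2*pi)" using arctan_ubound[of a] by simp
    then show ?thesis unfolding inner0 outer0 by simp
  qed
  finally show ?thesis by (simp add: a_def)
qed

lemma beta_closed:
  "beta_c c l = 4 * ((pi/2 - arctan (l/(c * sqrt 2)) - (l/(c * sqrt 2))/(1+(l/(c * sqrt 2))^2)) / (2*pi))"
proof -
  define a where "a = l/(c * sqrt 2)"
  have "(\<lambda>u. u\<^sup>2 * Phi (- (l * u) / (c * sqrt 2)) * std_normal_density u) = (\<lambda>u. (\<lambda>u. u^2) u * Phi (-(a*u)) * std_normal_density u)"
    by (auto simp: a_def)
  then have "beta_c c l = 4 * (LINT u:{0<..}|lborel. (\<lambda>u. u^2) u * Phi (-(a*u)) * std_normal_density u)"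
    by (simp add: beta_c_def)
  also have "\<dots> = 4 * enn2real (\<integral>\<^sup>+y. (\<integral>\<^sup>+u. ennreal (u^2 * u * std_normal_density u * std_normal_density (u*y)) * indicator {0<..} u \<partial>lborel) * indicator {a ..} y \<partial>lborel)"
    by (subst swap) auto
  also have "\<dots> = 4 * ((pi/2 - arctan a - a/(1+a^2)) / (2*pi))"
  proof -
    have "0 \<le> (pi/2 - arctan a - a/(1+a^2)) / (2*pi)"
      using P_pos[of a] by simp
    then show ?thesis unfolding inner2 outer2 by simp
  qed
  finally show ?thesis by (simp add: a_def)
qed



lemma atan_lower: assumes "0 \<le> t" shows "t - t^3/3 + t^5/5 - t^7/7 \<le> arctan t"
proof -
  let ?f = "\<lambda>x. arctan x - (x - x^3/3 + x^5/5 - x^7/7)"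
  have "?f 0 \<le> ?f t"
  proof (rule DERIV_nonneg_imp_nondecreasing[OF assms])
    fix x :: real assume "0 \<le> x"
    have nz: "1 + x^2 > 0" by (simp add: add_pos_nonneg)
    have "(?f has_real_derivative 1/(1+x^2) - (1 - x^2 + x^4 - x^6)) (at x)"
      by (rule derivative_eq_intros refl | use DERIV_arctan[of x] in \<open>simp add: inverse_eq_divide\<close>)+
    moreover have "1/(1+x^2) - (1 - x^2 + x^4 - x^6) = x^8/(1+x^2)"
      using nz by (simp add: field_simps)
    ultimately show "\<exists>y. (?f has_real_derivative y) (at x) \<and> 0 \<le> y" by auto
  qed
  then show ?thesis by simp
qed

lemma atan_upper: assumes "0 \<le> t" shows "arctan t \<le> t - t^3/3 + t^5/5"
proof -
  let ?f = "\<lambda>x. (x - x^3/3 + x^5/5) - arctan x"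
  have "?f 0 \<le> ?f t"
  proof (rule DERIV_nonneg_imp_nondecreasing[OF assms])
    fix x :: real assume "0 \<le> x"
    have nz: "1 + x^2 > 0" by (simp add: add_pos_nonneg)
    have "(?f has_real_derivative (1 - x^2 + x^4) - 1/(1+x^2)) (at x)"
      by (rule derivative_eq_intros refl | use DERIV_arctan[of x] in \<open>simp add: inverse_eq_divide\<close>)+
    moreover have "(1 - x^2 + x^4) - 1/(1+x^2) = x^6/(1+x^2)"
      using nz by (simp add: field_simps)
    ultimately show "\<exists>y. (?f has_real_derivative y) (at x) \<and> 0 \<le> y" by auto
  qed
  then show ?thesis by simp
qed

lemma atan_shift: assumes "0 < a" shows "arctan a = pi/4 + arctan ((a-1)/(a+1))"
proof -
  have t: "\<bar>(a-1)/(a+1)\<bar> < 1" using assms by (simp add: abs_less_iff field_simps)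
  have "arctan 1 + arctan ((a-1)/(a+1)) = arctan ((1 + (a-1)/(a+1)) / (1 - 1 * ((a-1)/(a+1))))"
    by (rule arctan_add) (use t in auto)
  also have "(1 + (a-1)/(a+1)) / (1 - 1 * ((a-1)/(a+1))) = a"
    using assms by (simp add: field_simps)
  finally show ?thesis by (simp add: arctan_one)
qed

definition PP :: "real \<Rightarrow> real" where "PP a = pi/2 - arctan a - a/(1+a^2)"
definition qq :: "real \<Rightarrow> real" where "qq a = PP a - a/(1+a^2)^2"
definition hh :: "real \<Rightarrow> real" where "hh a = a^2 * PP a"

lemma q_num1: "qq (12128/10000) > 0"
proof -
  have "arctan (12128/10000) = pi/4 + arctan (133/1383)"
    using atan_shift[of "12128/10000"] by simp
  moreover have "arctan (133/1383) \<le> (133/1383) - (133/1383)^3/3 + (133/1383)^5/5"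
    by (rule atan_upper) simp
  moreover note pi_approx
  ultimately show ?thesis unfolding qq_def PP_def by (simp add: power_divide)
qed

lemma q_num2: "qq (121325/100000) < 0"
proof -
  have "arctan (121325/100000) = pi/4 + arctan (853/8853)"
    using atan_shift[of "121325/100000"] by simp
  moreover have "(853/8853) - (853/8853)^3/3 + (853/8853)^5/5 - (853/8853)^7/7 \<le> arctan (853/8853)"
    by (rule atan_lower) simp
  moreover note pi_approx
  ultimately show ?thesis unfolding qq_def PP_def by (simp add: power_divide)
qed

lemma d_frac2: "((\<lambda>y. y/(1+y^2)^2) has_real_derivative (1-3*x^2)/(1+x^2)^3) (at x)"
proof -
  have nz: "1 + x^2 > 0" by (simp add: add_pos_nonneg)
  have "((\<lambda>y. y/(1+y^2)^2) has_real_derivative (1*(1+x^2)^2 - x*(2*(1+x^2)*(2*x)))/((1+x^2)^2*(1+x^2)^2)) (at x)"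
    using nz by (auto intro!: derivative_eq_intros simp: power2_eq_square)
  moreover have "(1*(1+x^2)^2 - x*(2*(1+x^2)*(2*x)))/((1+x^2)^2*(1+x^2)^2) = (1-3*x^2)/(1+x^2)^3"
  proof -
    have e: "\<And>z::real. z > 0 \<Longrightarrow> (1*z^2 - x*(2*z*(2*x)))/(z^2*z^2) = (z - 4*x^2)/z^3"
      by (simp add: field_simps power2_eq_square power3_eq_cube)
    show ?thesis using e[OF nz] by simp
  qed
  ultimately show ?thesis by simp
qed

lemma dPP: "(PP has_real_derivative -2/(1+x^2)^2) (at x)"
proof -
  have nz: "1 + x^2 > 0" by (simp add: add_pos_nonneg)
  have d: "((\<lambda>x. pi/2 - arctan x - x/(1+x^2)) has_real_derivative 0 - 1/(1+x^2) - (1-x^2)/(1+x^2)^2) (at x)"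
    by (intro DERIV_diff d_frac DERIV_const) (use DERIV_arctan[of x] in \<open>simp add: inverse_eq_divide\<close>)
  have "0 - 1/(1+x^2) - (1-x^2)/(1+x^2)^2 = -2/(1+x^2)^2"
  proof -
    have e: "\<And>z::real. z > 0 \<Longrightarrow> 0 - 1/z - (2-z)/z^2 = -2/z^2"
      by (simp add: field_simps power2_eq_square)
    have "1 - x^2 = 2 - (1+x^2)" by simp
    then show ?thesis using e[OF nz] by simp
  qed
  then show ?thesis using d unfolding PP_def[abs_def] by simp
qed

lemma dqq: "(qq has_real_derivative (x^2-3)/(1+x^2)^3) (at x)"
proof -
  have nz: "1 + x^2 > 0" by (simp add: add_pos_nonneg)
  have "(qq has_real_derivative -2/(1+x^2)^2 - (1-3*x^2)/(1+x^2)^3) (at x)"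
    unfolding qq_def[abs_def] by (intro DERIV_diff dPP d_frac2)
  moreover have "-2/(1+x^2)^2 - (1-3*x^2)/(1+x^2)^3 = (x^2-3)/(1+x^2)^3"
  proof -
    have e: "\<And>z::real. z > 0 \<Longrightarrow> -2/z^2 - (1-3*x^2)/z^3 = (-2*z - 1 + 3*x^2)/z^3"
      by (simp add: field_simps power2_eq_square power3_eq_cube)
    show ?thesis using e[OF nz] by (simp add: algebra_simps)
  qed
  ultimately show ?thesis by simp
qed

lemma dhh: "(hh has_real_derivative 2*x*qq x) (at x)"
proof -
  have nz: "1 + x^2 > 0" by (simp add: add_pos_nonneg)
  have "(hh has_real_derivative (2*x) * PP x + x^2 * (-2/(1+x^2)^2)) (at x)"
  proof -
    have "((\<lambda>a. a^2) has_real_derivative 2*x) (at x)" by (auto intro!: derivative_eq_intros)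
    from DERIV_mult[OF this dPP] show ?thesis unfolding hh_def[abs_def] by (simp add: ac_simps)
  qed
  moreover have "(2*x) * PP x + x^2 * (-2/(1+x^2)^2) = 2*x*qq x"
    unfolding qq_def by (simp add: algebra_simps power2_eq_square)
  ultimately show ?thesis by simp
qed

lemma isCont_qq: "isCont qq x"
  using dqq by (rule DERIV_isCont)

lemma cont_hh: "continuous_on S hh"
  using dhh by (meson DERIV_isCont continuous_at_imp_continuous_on)

lemma qq_big: assumes "3/2 \<le> a" shows "qq a < 0"
proof -
  have a: "a > 0" using assms by simp
  have "arctan (1/a) = pi/2 - arctan a" using arctan_inverse[of a] a by (auto simp: inverse_eq_divide)
  moreover have "arctan (1/a) \<le> 1/a - (1/a)^3/3 + (1/a)^5/5"
    by (rule atan_upper) (use a in simp)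
  moreover have "1/a - (1/a)^3/3 + (1/a)^5/5 < a/(1+a^2) + a/(1+a^2)^2"
  proof -
    have nz: "1 + a^2 > 0" by (simp add: add_pos_nonneg)
    have e1: "a/(1+a^2) + a/(1+a^2)^2 = (a^3+2*a)/(1+a^2)^2"
    proof -
      have e: "\<And>z::real. z>0 \<Longrightarrow> a/z + a/z^2 = (a*z+a)/z^2" by (simp add: field_simps power2_eq_square)
      have "a*(1+a^2)+a = a^3+2*a" by algebra
      then show ?thesis using e[OF nz] by simp
    qed
    have e2: "1/a - (1/a)^3/3 + (1/a)^5/5 = (15*a^4 - 5*a^2 + 3)/(15*a^5)"
      using a by (simp add: field_simps power2_eq_square power3_eq_cube) algebra
    have "(3/2)^2 \<le> a^2" by (rule power_mono) (use assms in auto)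
    then have b: "a^2 \<ge> 9/4" by (simp add: power2_eq_square)
    have "5*a^6 - 8*a^4 - a^2 - 3 = a^2 * (a^2 * (5*a^2 - 8) - 1) - 3" by algebra
    also have "\<dots> > 0"
    proof -
      have "a^2 * (5*a^2 - 8) \<ge> 9/4 * (13/4)" using b by (intro mult_mono) auto
      then have "a^2 * (5*a^2 - 8) - 1 \<ge> 2" by simp
      then have "a^2 * (a^2 * (5*a^2 - 8) - 1) \<ge> 9/4 * 2" using b by (intro mult_mono) auto
      then show ?thesis by simp
    qed
    finally have p: "5*a^6 - 8*a^4 - a^2 - 3 > 0" .
    have l1: "(15*a^4 - 5*a^2 + 3) * (1+a^2)^2 = 15*a^8+25*a^6+8*a^4+a^2+3" by algebra
    have l2: "(a^3+2*a)*(15*a^5) = 15*a^8+30*a^6" by algebra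
    have "(15*a^4 - 5*a^2 + 3) * (1+a^2)^2 < (a^3+2*a)*(15*a^5)" unfolding l1 l2 using p by simp
    then have "(15*a^4 - 5*a^2 + 3)/(15*a^5) < (a^3+2*a)/(1+a^2)^2"
      using a nz by (auto simp: frac_less_eq intro!: divide_neg_pos)
    then show ?thesis unfolding e1 e2 .
  qed
  ultimately show ?thesis unfolding qq_def PP_def by simp
qed

lemma qq_decr: assumes "0 \<le> x" "x < y" "y \<le> 3/2" shows "qq y < qq x"
proof (rule DERIV_neg_imp_decreasing[OF assms(2)])
  fix z assume z: "x \<le> z" "z \<le> y"
  have "z^2 \<le> (3/2)^2" by (rule power_mono) (use z assms in auto)
  then have "z^2 - 3 < 0" by (simp add: power2_eq_square)
  moreover have "(1+z^2)^3 > 0" by (simp add: add_pos_nonneg)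
  ultimately have "(z^2-3)/(1+z^2)^3 < 0" by (simp add: divide_neg_pos)
  then show "\<exists>y. (qq has_real_derivative y) (at z) \<and> y < 0" using dqq by blast
qed

lemma root_exists:
  "\<exists>s. 12128/10000 < s \<and> s < 121325/100000 \<and> qq s = 0
     \<and> (\<forall>x. 0 \<le> x \<and> x < s \<longrightarrow> qq x > 0) \<and> (\<forall>x. s < x \<longrightarrow> qq x < 0)"
proof -
  obtain s where s: "12128/10000 \<le> s" "s \<le> 121325/100000" "qq s = 0"
    using IVT2[of qq "121325/100000" 0 "12128/10000"] q_num1 q_num2 isCont_qq by force
  have s1: "12128/10000 < s" using s q_num1 by (cases "s = 12128/10000") auto
  have s2: "s < 121325/100000" using s q_num2 by (cases "s = 121325/100000") auto
  have pos: "qq x > 0" if "0 \<le> x" "x < s" for x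
    using qq_decr[of x s] that s s2 by simp
  have neg: "qq x < 0" if "s < x" for x
  proof (cases "x \<le> 3/2")
    case True then show ?thesis using qq_decr[of s x] that s s1 by simp
  next
    case False then show ?thesis using qq_big[of x] by simp
  qed
  show ?thesis using s1 s2 s pos neg by blast
qed

lemma hh_max:
  assumes s: "s > 0" "qq s = 0" "\<forall>x. 0 \<le> x \<and> x < s \<longrightarrow> qq x > 0" "\<forall>x. s < x \<longrightarrow> qq x < 0"
  and x: "x > 0" "x \<noteq> s"
  shows "hh x < hh s"
proof (cases "x < s")
  case True
  show ?thesis
  proof (rule DERIV_pos_imp_increasing_open[OF True _ cont_hh])
    fix z assume z: "x < z" "z < s"
    then have "2*z*qq z > 0" using s x by simp
    then show "\<exists>y. (hh has_real_derivative y) (at z) \<and> 0 < y" using dhh by blast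
  qed
next
  case False
  then have xs: "s < x" using x by simp
  show ?thesis
  proof (rule DERIV_neg_imp_decreasing_open[OF xs _ cont_hh])
    fix z assume z: "s < z" "z < x"
    then have "2*z*qq z < 0" using s by (simp add: mult_pos_neg)
    then show "\<exists>y. (hh has_real_derivative y) (at z) \<and> y < 0" using dhh by blast
  qed
qed


lemma g_hh: assumes "c > 0" shows "g_c c l = 4*c^3/pi * hh (l/(c * sqrt 2))"
proof -
  define a where "a = l/(c * sqrt 2)"
  have l: "l = a*c * sqrt 2" using assms by (simp add: a_def)
  have "g_c c l = c * l^2 * (4 * (PP a / (2*pi)))"
    unfolding g_c_def beta_closed PP_def a_def by simp
  also have "l^2 = 2*a^2*c^2" unfolding l by (simp add: power_mult_distrib)
  finally show ?thesis unfolding hh_def a_def[symmetric] by (simp add: power3_eq_cube power2_eq_square)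
qed

theorem corollary6:
  fixes c :: real
  assumes "0 < c" and "c \<le> 1"
  shows "\<exists>l_opt. l_opt > 0
           \<and> (\<forall>l>0. l \<noteq> l_opt \<longrightarrow> g_c c l < g_c c l_opt)
           \<and> \<bar>l_opt * sqrt 2 / c - 2.426\<bar> < 0.0005
           \<and> \<bar>alpha_c c l_opt - 0.439\<bar> < 0.0005"
proof -
  obtain s where s1: "12128/10000 < s" and s2: "s < 121325/100000" and sq: "qq s = 0"
     and spos: "\<forall>x. 0 \<le> x \<and> x < s \<longrightarrow> qq x > 0" and sneg: "\<forall>x. s < x \<longrightarrow> qq x < 0"
    using root_exists by blast
  have s0: "s > 0" using s1 by simp
  define lo where "lo = s * c * sqrt 2"
  have lo0: "lo > 0" using s0 assms by (simp add: lo_def)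
  have los: "lo / (c * sqrt 2) = s" using assms by (simp add: lo_def)
  have opt: "g_c c l < g_c c lo" if l: "l > 0" "l \<noteq> lo" for l
  proof -
    have a0: "l/(c * sqrt 2) > 0" using l assms by simp
    have as: "l/(c * sqrt 2) \<noteq> s"
    proof
      assume "l/(c * sqrt 2) = s"
      then have "l = lo" using assms by (simp add: lo_def field_simps)
      with l show False by simp
    qed
    have "hh (l/(c * sqrt 2)) < hh s" by (rule hh_max[OF s0 sq spos sneg a0 as])
    moreover have "4*c^3/pi > 0" using assms by simp
    ultimately show ?thesis unfolding g_hh[OF assms(1)] los by (rule mult_strict_left_mono)
  qed
  have r: "lo * sqrt 2 / c = 2 * s" using assms by (simp add: lo_def)
  have ab: "\<bar>lo * sqrt 2 / c - 2.426\<bar> < 0.0005" unfolding r abs_less_iff using s1 s2 by simp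
  have al: "alpha_c c lo = 1 - 2 * arctan s / pi"
    unfolding alpha_closed los by (simp add: field_simps)
  have t1: "arctan s > pi/4 + ((133/1383) - (133/1383)^3/3 + (133/1383)^5/5 - (133/1383)^7/7)"
  proof -
    have "arctan (12128/10000) < arctan s" using s1 by (simp add: arctan_less_iff)
    moreover have "arctan (12128/10000) = pi/4 + arctan (133/1383)"
      using atan_shift[of "12128/10000"] by simp
    moreover have "(133/1383) - (133/1383)^3/3 + (133/1383)^5/5 - (133/1383)^7/7 \<le> arctan (133/1383)"
      by (rule atan_lower) simp
    ultimately show ?thesis by simp
  qed
  have t2: "arctan s < pi/4 + ((853/8853) - (853/8853)^3/3 + (853/8853)^5/5)"
  proof -
    have "arctan s < arctan (121325/100000)" using s2 by (simp add: arctan_less_iff)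
    moreover have "arctan (121325/100000) = pi/4 + arctan (853/8853)"
      using atan_shift[of "121325/100000"] by simp
    moreover have "arctan (853/8853) \<le> (853/8853) - (853/8853)^3/3 + (853/8853)^5/5"
      by (rule atan_upper) simp
    ultimately show ?thesis by simp
  qed
  have "0.4385 * pi < pi - 2 * arctan s" "pi - 2 * arctan s < 0.4395 * pi"
    using t1 t2 pi_approx by (simp_all add: power_divide)
  then have "0.4385 < 1 - 2 * arctan s / pi" "1 - 2 * arctan s / pi < 0.4395"
    using pi_gt_zero by (simp_all add: field_simps)
  then have "\<bar>alpha_c c lo - 0.439\<bar> < 0.0005" unfolding al abs_less_iff by simp
  then show ?thesis using lo0 opt ab by blast
qed

end
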